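(* Let $\kappa\ge1$, $n\ge1$ be integers and $0<\epsilon<1$. Let $\bar q\in\mathbb{R}^{2^\kappa}$ be given by $\bar q_0=0$ and $\bar q_i=\frac{1}{2^\kappa-1}$ for $1\le i\le2^\kappa-1$. Then $\lambda(n,\epsilon,\bar q)\le\lambda(n,\epsilon,q)$ for every $q\in\mathbb{R}^{2^\kappa}$ with $q_i\ge0$ for all $i$ and $\sum_{i=0}^{2^\kappa-1}q_i=1$.
   Context: $W=\mathbb{F}_2^\kappa$; $\nu(i)\in W$ is the binary expansion of $i\in\{0,\dots,2^\kappa-1\}$; vectors $q$ are indexed $q_0,\dots,q_{2^\kappa-1}$. For a subspace $S\subseteq W$, $\zeta(S,q)=\sum_{i:\nu(i)\in S}q_i$; $\Xi(W,\kappa-1)$ is the set of $(\kappa-1)$-dimensional subspaces of $W$. For real $q$ define $\lambda(n,\epsilon,q)=(2-\epsilon)^n2^{-\kappa}\Big(1+\sum_{S\in\Xi(W,\kappa-1)}\big(\tfrac{\epsilon}{2-\epsilon}\big)^{n(1-\zeta(S,q))}\Big)-1$ (for $q$ the column-distribution vector of a generator matrix, this is the $\chi^2$ divergence between $p_{MZ}$ and $p_Mp_Z$ for the coset code over a binary erasure channel with erasure probability $\epsilon$). *)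

theory Defs
  imports "HOL-Analysis.Analysis"
begin

text \<open>W = F_2^kappa is identified with {0..<2^kappa} via the binary expansion nu;
  vector addition in W corresponds to bitwise xor on naturals.\<close>

definition W :: "nat \<Rightarrow> nat set" where
  "W \<kappa> = {0..<2^\<kappa>}"

definition is_subspace :: "nat \<Rightarrow> nat set \<Rightarrow> bool" where
  "is_subspace \<kappa> S \<longleftrightarrow> S \<subseteq> W \<kappa> \<and> 0 \<in> S \<and> (\<forall>x\<in>S. \<forall>y\<in>S. xor x y \<in> S)"

text \<open>A subspace of an F_2-vector space has dimension d iff it has 2^d elements.\<close>
definition Xi :: "nat \<Rightarrow> nat \<Rightarrow> nat set set" where
  "Xi \<kappa> d = {S. is_subspace \<kappa> S \<and> card S = 2^d}"

definition zeta :: "nat set \<Rightarrow> (nat \<Rightarrow> real) \<Rightarrow> real" where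
  "zeta S q = (\<Sum>i\<in>S. q i)"

definition lam :: "nat \<Rightarrow> nat \<Rightarrow> real \<Rightarrow> (nat \<Rightarrow> real) \<Rightarrow> real" where
  "lam \<kappa> n \<epsilon> q = (2 - \<epsilon>)^n * 2 powr (- real \<kappa>) *
     (1 + (\<Sum>S\<in>Xi \<kappa> (\<kappa> - 1). (\<epsilon> / (2 - \<epsilon>)) powr (real n * (1 - zeta S q)))) - 1"

definition qbar :: "nat \<Rightarrow> nat \<Rightarrow> real" where
  "qbar \<kappa> i = (if i = 0 then 0 else 1 / (2^\<kappa> - 1))"

end

theory Submission
  imports Defs
begin

definition T :: "nat \<Rightarrow> nat \<Rightarrow> nat \<Rightarrow> nat" where
  "T k v x = xor x (if bit x k then v else 0)"

lemma T_xor: "T k v (xor x y) = xor (T k v x) (T k v y)"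
  by (rule bit_eqI) (auto simp: T_def bit_xor_iff)

lemma T_inv: "\<not> bit v k \<Longrightarrow> T k v (T k v x) = x"
  by (rule bit_eqI) (auto simp: T_def bit_xor_iff)

lemma xor_lt: "(x::nat) < 2^k \<Longrightarrow> y < 2^k \<Longrightarrow> xor x y < 2^k"
  by (metis take_bit_nat_eq_self_iff take_bit_xor)

lemma bit_lt: assumes "(x::nat) < 2^m" "bit x k" shows "k < m"
proof (rule ccontr)
  assume "\<not> k < m"
  then have "(2::nat)^m \<le> 2^k" by simp
  with assms(1) have "x < 2^k" by (meson less_le_trans)
  then have "x div 2^k = 0" by (simp add: div_less)
  with assms(2) show False by (simp add: bit_iff_odd)
qed

lemma T_W: "x < 2^\<kappa> \<Longrightarrow> v < 2^\<kappa> \<Longrightarrow> T k v x < 2^\<kappa>"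
  by (auto simp: T_def intro: xor_lt)

lemma finite_Xi: "finite (Xi \<kappa> d)"
proof -
  have "Xi \<kappa> d \<subseteq> Pow (W \<kappa>)" by (auto simp: Xi_def is_subspace_def)
  moreover have "finite (Pow (W \<kappa>))" by (simp add: W_def)
  ultimately show ?thesis by (rule finite_subset)
qed

lemma m_inv:
  assumes A: "\<forall>x\<in>W \<kappa>. \<sigma> x \<in> W \<kappa>" and B: "\<forall>x\<in>W \<kappa>. \<sigma> (\<sigma> x) = x"
    and C: "\<forall>x\<in>W \<kappa>. \<forall>y\<in>W \<kappa>. \<sigma> (xor x y) = xor (\<sigma> x) (\<sigma> y)" and i: "i \<in> W \<kappa>"
  shows "card {S\<in>Xi \<kappa> d. i\<in>S} = card {S\<in>Xi \<kappa> d. \<sigma> i \<in> S}"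
proof -
  have z: "0 \<in> W \<kappa>" by (simp add: W_def)
  have s0: "\<sigma> 0 = 0" using C z by (metis xor_self_eq)
  have img: "\<sigma> ` S \<in> Xi \<kappa> d" if S: "S \<in> Xi \<kappa> d" for S
  proof -
    have sub: "S \<subseteq> W \<kappa>" "0 \<in> S" "\<forall>x\<in>S. \<forall>y\<in>S. xor x y \<in> S" "card S = 2^d"
      using S by (auto simp: Xi_def is_subspace_def)
    have "inj_on \<sigma> S" using sub(1) B by (metis inj_on_inverseI subsetD)
    then have "card (\<sigma> ` S) = 2^d" using sub(4) by (simp add: card_image)
    moreover have "\<sigma> ` S \<subseteq> W \<kappa>" using sub(1) A by auto
    moreover have "0 \<in> \<sigma> ` S" using sub(2) s0 by (metis image_eqI)
    moreover have "\<forall>x\<in>\<sigma> ` S. \<forall>y\<in>\<sigma> ` S. xor x y \<in> \<sigma> ` S"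
    proof (intro ballI)
      fix x y assume "x \<in> \<sigma> ` S" "y \<in> \<sigma> ` S"
      then obtain a b where ab: "a \<in> S" "b \<in> S" "x = \<sigma> a" "y = \<sigma> b" by auto
      then have "xor x y = \<sigma> (xor a b)" using C sub(1) ab by (simp add: subset_iff)
      then show "xor x y \<in> \<sigma> ` S" using sub(3) ab by auto
    qed
    ultimately show ?thesis by (simp add: Xi_def is_subspace_def)
  qed
  have invS: "\<sigma> ` (\<sigma> ` S) = S" if "S \<in> Xi \<kappa> d" for S
  proof -
    have "S \<subseteq> W \<kappa>" using that by (auto simp: Xi_def is_subspace_def)
    then have "\<forall>x\<in>S. \<sigma> (\<sigma> x) = x" using B by auto
    then show ?thesis by (force simp: image_image)
  qed
  have inj: "inj_on (image \<sigma>) (Xi \<kappa> d)" by (metis inj_on_inverseI invS)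
  have "card {S\<in>Xi \<kappa> d. i\<in>S} \<le> card {S\<in>Xi \<kappa> d. \<sigma> i \<in> S}"
    by (rule card_inj_on_le[where f="image \<sigma>"])
       (auto intro: inj_on_subset[OF inj] img simp: finite_Xi)
  moreover have "card {S\<in>Xi \<kappa> d. \<sigma> i\<in>S} \<le> card {S\<in>Xi \<kappa> d. i \<in> S}"
  proof (rule card_inj_on_le[where f="image \<sigma>"])
    show "inj_on (image \<sigma>) {S \<in> Xi \<kappa> d. \<sigma> i \<in> S}" by (auto intro: inj_on_subset[OF inj])
    show "image \<sigma> ` {S \<in> Xi \<kappa> d. \<sigma> i \<in> S} \<subseteq> {S \<in> Xi \<kappa> d. i \<in> S}"
      using img B i by force
    show "finite {S \<in> Xi \<kappa> d. i \<in> S}" by (simp add: finite_Xi)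
  qed
  ultimately show ?thesis by simp
qed

lemma m_T:
  assumes "v < 2^\<kappa>" "\<not> bit v k" "i \<in> W \<kappa>"
  shows "card {S\<in>Xi \<kappa> d. i\<in>S} = card {S\<in>Xi \<kappa> d. T k v i \<in> S}"
proof (rule m_inv)
  show "\<forall>x\<in>W \<kappa>. T k v x \<in> W \<kappa>" using assms(1) by (simp add: W_def T_W)
  show "\<forall>x\<in>W \<kappa>. T k v (T k v x) = x" using assms(2) by (simp add: T_inv)
  show "\<forall>x\<in>W \<kappa>. \<forall>y\<in>W \<kappa>. T k v (xor x y) = xor (T k v x) (T k v y)" by (simp add: T_xor)
  show "i \<in> W \<kappa>" by (rule assms(3))
qed

lemma m_eq:
  assumes "i \<in> W \<kappa>" "i \<noteq> 0"
  shows "card {S\<in>Xi \<kappa> d. i\<in>S} = card {S\<in>Xi \<kappa> d. 1 \<in> S}"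
proof -
  have "\<exists>k. bit i k"
  proof (rule ccontr)
    assume "\<not> (\<exists>k. bit i k)"
    then have "i = 0" by (rule_tac bit_eqI) simp
    with assms(2) show False by simp
  qed
  then obtain k where bk: "bit i k" by blast
  have il: "i < 2^\<kappa>" using assms by (simp add: W_def)
  have kl: "k < \<kappa>" using bit_lt[OF il bk] .
  have pk: "(2::nat)^k < 2^\<kappa>" using kl by simp
  define v where "v = xor i (2^k)"
  have v1: "v < 2^\<kappa>" unfolding v_def using il pk by (rule xor_lt)
  have v2: "\<not> bit v k" unfolding v_def by (simp add: bit_xor_iff bk bit_exp_iff)
  have Ti: "T k v i = 2^k"
  proof (rule bit_eqI)
    fix n show "bit (T k v i) n = bit ((2::nat)^k) n"
      using bk by (auto simp: T_def v_def bit_xor_iff bit_exp_iff)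
  qed
  have e1: "card {S\<in>Xi \<kappa> d. i\<in>S} = card {S\<in>Xi \<kappa> d. 2^k \<in> S}"
    using m_T[OF v1 v2 assms(1), of d] unfolding Ti .
  show ?thesis
  proof (cases "k = 0")
    case True then show ?thesis using e1 by simp
  next
    case False
    have o1: "(1::nat) < 2^\<kappa>" using kl by (intro one_less_power) auto
    obtain j where kj: "k = Suc j" using False not0_implies_Suc by blast
    have nb1: "\<not> bit (1::nat) k" unfolding kj by (rule not_bit_1_Suc)
    have T1: "T k 1 (2^k) = xor (2^k) 1" by (simp add: T_def bit_exp_iff)
    have pW: "(2::nat)^k \<in> W \<kappa>" using pk by (simp add: W_def)
    have e2: "card {S\<in>Xi \<kappa> d. (2::nat)^k\<in>S} = card {S\<in>Xi \<kappa> d. xor (2^k) 1 \<in> S}"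
      using m_T[OF o1 nb1 pW, of d] unfolding T1 .
    have nb2: "\<not> bit ((2::nat)^k) 0" using False by (simp add: bit_exp_iff)
    have xl: "xor ((2::nat)^k) 1 < 2^\<kappa>" using pk o1 by (rule xor_lt)
    have b0: "bit (xor ((2::nat)^k) 1) 0" using nb2 bit_1_0[where 'a=nat] by (simp add: bit_xor_iff)
    have "T 0 (2^k) (xor (2^k) 1) = xor (xor ((2::nat)^k) 1) (2^k)" using b0 by (simp add: T_def)
    also have "\<dots> = 1"
    proof (rule bit_eqI)
      fix n show "bit (xor (xor ((2::nat)^k) 1) (2^k)) n = bit (1::nat) n"
        by (auto simp: bit_xor_iff)
    qed
    finally have T2: "T 0 (2^k) (xor (2^k) 1) = (1::nat)" .
    have e3: "card {S\<in>Xi \<kappa> d. xor ((2::nat)^k) 1\<in>S} = card {S\<in>Xi \<kappa> d. 1 \<in> S}"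
      using m_T[OF pk nb2, of "xor (2^k) 1" d] xl T2 by (simp only: W_def atLeastLessThan_iff zero_le)
    show ?thesis using e1 e2 e3 by simp
  qed
qed

lemma dc:
  assumes "finite X" "\<forall>S\<in>X. S \<subseteq> A" "finite A"
  shows "(\<Sum>S\<in>X. \<Sum>i\<in>S. g i) = (\<Sum>i\<in>A. (g i :: real) * card {S\<in>X. i\<in>S})"
proof -
  have "(\<Sum>S\<in>X. \<Sum>i\<in>S. g i) = (\<Sum>S\<in>X. \<Sum>i\<in>A. if i \<in> S then g i else 0)"
  proof (rule sum.cong[OF refl])
    fix S assume "S \<in> X"
    then have "A \<inter> S = S" using assms(2) by auto
    then show "(\<Sum>i\<in>S. g i) = (\<Sum>i\<in>A. if i \<in> S then g i else 0)"
      using sum.inter_restrict[OF assms(3), of g S] by simp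
  qed
  also have "\<dots> = (\<Sum>i\<in>A. \<Sum>S\<in>X. if i \<in> S then g i else 0)" by (rule sum.swap)
  also have "\<dots> = (\<Sum>i\<in>A. g i * card {S\<in>X. i\<in>S})"
  proof (rule sum.cong[OF refl])
    fix i
    have "(\<Sum>S\<in>X. if i \<in> S then g i else 0) = (\<Sum>S\<in>X \<inter> {S. i \<in> S}. g i)"
      using sum.inter_restrict[OF assms(1), of "\<lambda>_. g i" "{S. i \<in> S}"] by simp
    also have "X \<inter> {S. i \<in> S} = {S\<in>X. i\<in>S}" by auto
    finally show "(\<Sum>S\<in>X. if i \<in> S then g i else 0) = g i * card {S\<in>X. i\<in>S}" by simp
  qed
  finally show ?thesis .
qed

lemma tangent:
  fixes r a x c :: real
  assumes "0 < r" "r < 1"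
  shows "r powr (a*(1-x)) \<ge> r powr (a*(1-c)) * (1 + (- ln r * a) * (x - c))"
proof -
  have "r powr (a*(1-x)) = exp (a*(1-c) * ln r) * exp ((- ln r * a) * (x - c))"
  proof -
    have "a*(1-x) * ln r = a*(1-c) * ln r + (- ln r * a) * (x - c)" by algebra
    have e: "exp (a*(1-x) * ln r) = exp (a*(1-c) * ln r) * exp ((- ln r * a) * (x - c))"
      unfolding \<open>a*(1-x) * ln r = _\<close> by (rule exp_add)
    show ?thesis using assms e by (simp add: powr_def)
  qed
  also have "\<dots> \<ge> exp (a*(1-c) * ln r) * (1 + (- ln r * a) * (x - c))"
    by (rule mult_left_mono[OF exp_ge_add_one_self]) simp
  finally show ?thesis using assms by (simp add: powr_def)
qed

theorem theorem7:
  fixes \<kappa> n :: nat and \<epsilon> :: real and q :: "nat \<Rightarrow> real"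
  assumes "\<kappa> \<ge> 1" and "n \<ge> 1" and "0 < \<epsilon>" and "\<epsilon> < 1"
    and "\<forall>i<2^\<kappa>. q i \<ge> 0"
    and "(\<Sum>i<2^\<kappa>. q i) = 1"
  shows "lam \<kappa> n \<epsilon> (qbar \<kappa>) \<le> lam \<kappa> n \<epsilon> q"
proof -
  define X where "X = Xi \<kappa> (\<kappa> - 1)"
  define m where "m i = card {S\<in>X. i\<in>S}" for i
  define N where "N = card X"
  define M where "M = m 1"
  define c :: real where "c = (2^(\<kappa>-1) - 1) / (2^\<kappa> - 1)"
  have fX: "finite X" by (simp add: X_def finite_Xi)
  have XS: "S \<subseteq> W \<kappa>" "0 \<in> S" "card S = 2^(\<kappa>-1)" if "S \<in> X" for S
    using that by (auto simp: X_def Xi_def is_subspace_def)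
  have fW: "finite (W \<kappa>)" by (simp add: W_def)
  have W0: "0 \<in> W \<kappa>" by (simp add: W_def)
  have WU: "W \<kappa> = {..<2^\<kappa>}" by (auto simp: W_def)
  have pk: "(2::real)^\<kappa> = 2 * 2^(\<kappa>-1)" using assms(1)
    by (cases \<kappa>) auto
  have "(1::real) \<le> 2^(\<kappa>-1)" by simp
  then have Npos: "(2::real)^\<kappa> - 1 > 0" using pk by linarith
  have "{S\<in>X. 0\<in>S} = X" using XS(2) by blast
  then have m0: "m 0 = N" by (simp add: m_def N_def)
  have mi: "m i = M" if "i \<in> W \<kappa> - {0}" for i
    using that m_eq[of i \<kappa> "\<kappa>-1"] unfolding m_def M_def X_def by blast
  have MN: "M \<le> N" unfolding M_def m_def N_def using fX by (intro card_mono) auto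
  have gen: "(\<Sum>i\<in>W \<kappa>. g i * m i) = g 0 * N + (\<Sum>i\<in>W \<kappa> - {0}. g i) * M" for g :: "nat \<Rightarrow> real"
  proof -
    have "(\<Sum>i\<in>W \<kappa>. g i * m i) = g 0 * m 0 + (\<Sum>i\<in>W \<kappa> - {0}. g i * m i)"
      using sum.remove[OF fW W0] by simp
    also have "(\<Sum>i\<in>W \<kappa> - {0}. g i * m i) = (\<Sum>i\<in>W \<kappa> - {0}. g i * M)"
      using mi by simp
    finally show ?thesis using m0 by (simp add: sum_distrib_right)
  qed
  have "(\<Sum>S\<in>X. \<Sum>i\<in>S. (1::real)) = (\<Sum>i\<in>W \<kappa>. 1 * real (m i))"
    unfolding m_def using dc[OF fX _ fW, of "\<lambda>_. 1"] XS by simp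
  also have "\<dots> = N + (2^\<kappa> - 1) * M"
    using gen[of "\<lambda>_. 1"] fW W0 by (simp add: W_def card_Diff_singleton of_nat_diff)
  finally have "(\<Sum>S\<in>X. (2::real)^(\<kappa>-1)) = N + (2^\<kappa> - 1) * M"
    using XS by simp
  then have cnt: "real N * 2^(\<kappa>-1) = N + (2^\<kappa> - 1) * M" by (simp add: N_def)
  have McN: "real M = N * c"
    unfolding c_def using cnt Npos by (simp add: field_simps)
  have sq: "(\<Sum>i\<in>W \<kappa>. q i) = 1" using assms(6) WU by simp
  have q0: "q 0 \<ge> 0" using assms(5) by simp
  have "(\<Sum>S\<in>X. zeta S q) = (\<Sum>i\<in>W \<kappa>. q i * m i)"
    unfolding zeta_def m_def using dc[OF fX _ fW, of q] XS by simp
  also have "\<dots> = q 0 * N + (1 - q 0) * M"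
    using gen[of q] sq sum.remove[OF fW W0, of q] by simp
  finally have zs: "(\<Sum>S\<in>X. zeta S q) \<ge> N * c"
  proof -
    assume e: "(\<Sum>S\<in>X. zeta S q) = q 0 * N + (1 - q 0) * M"
    have "q 0 * (real N - M) \<ge> 0" using q0 MN by simp
    then show ?thesis using e McN by (simp add: algebra_simps)
  qed
  have zb: "zeta S (qbar \<kappa>) = c" if "S \<in> X" for S
  proof -
    have fS: "finite S" using XS(1)[OF that] fW finite_subset by blast
    have "zeta S (qbar \<kappa>) = qbar \<kappa> 0 + (\<Sum>i\<in>S - {0}. qbar \<kappa> i)"
      unfolding zeta_def using sum.remove[OF fS XS(2)[OF that]] by simp
    also have "\<dots> = (\<Sum>i\<in>S - {0}. 1 / (2^\<kappa> - 1))" by (simp add: qbar_def)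
    also have "\<dots> = real (card S - 1) / (2^\<kappa> - 1)"
      using fS XS(2)[OF that] by (simp add: card_Diff_singleton)
    also have "\<dots> = c" using XS(3)[OF that] by (simp add: c_def of_nat_diff)
    finally show ?thesis .
  qed
  define r where "r = \<epsilon> / (2 - \<epsilon>)"
  have r0: "0 < r" and r1: "r < 1" using assms(3,4) by (auto simp: r_def field_simps)
  define L where "L = - ln r * real n"
  have "ln r < 0" using r0 r1 by simp
  then have L0: "L \<ge> 0" by (simp add: L_def mult_nonpos_nonneg)
  define fc where "fc = r powr (real n * (1 - c))"
  have fc0: "fc \<ge> 0" by (simp add: fc_def)
  have "(\<Sum>S\<in>X. r powr (real n * (1 - zeta S q))) \<ge> (\<Sum>S\<in>X. fc * (1 + L * (zeta S q - c)))"
    by (rule sum_mono) (unfold fc_def L_def, rule tangent[OF r0 r1])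
  also have "(\<Sum>S\<in>X. fc * (1 + L * (zeta S q - c))) = (\<Sum>S\<in>X. fc + (fc*L) * zeta S q - fc*L*c)"
    by (rule sum.cong) (simp_all add: algebra_simps)
  also have "\<dots> = N*fc + (fc*L) * (\<Sum>S\<in>X. zeta S q) - N*(fc*L*c)"
    by (simp add: sum_subtractf sum.distrib sum_distrib_left N_def)
  also have "\<dots> = fc * (N + L * ((\<Sum>S\<in>X. zeta S q) - N * c))"
    by (simp add: algebra_simps)
  also have "\<dots> \<ge> fc * N"
    using zs L0 fc0 by (intro mult_left_mono) auto
  also have "fc * N = (\<Sum>S\<in>X. r powr (real n * (1 - zeta S (qbar \<kappa>))))"
    using zb by (simp add: fc_def N_def)
  finally have key: "(\<Sum>S\<in>X. r powr (real n * (1 - zeta S (qbar \<kappa>)))) \<le>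
      (\<Sum>S\<in>X. r powr (real n * (1 - zeta S q)))" .
  have pos: "(2 - \<epsilon>)^n * 2 powr (- real \<kappa>) > 0" using assms(4) by simp
  have key': "(\<Sum>S\<in>Xi \<kappa> (\<kappa> - 1). (\<epsilon> / (2 - \<epsilon>)) powr (real n * (1 - zeta S (qbar \<kappa>)))) \<le>
      (\<Sum>S\<in>Xi \<kappa> (\<kappa> - 1). (\<epsilon> / (2 - \<epsilon>)) powr (real n * (1 - zeta S q)))"
    using key by (simp only: X_def r_def)
  have "(2 - \<epsilon>)^n * 2 powr (- real \<kappa>) *
     (1 + (\<Sum>S\<in>Xi \<kappa> (\<kappa> - 1). (\<epsilon> / (2 - \<epsilon>)) powr (real n * (1 - zeta S (qbar \<kappa>))))) \<le>
     (2 - \<epsilon>)^n * 2 powr (- real \<kappa>) *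
     (1 + (\<Sum>S\<in>Xi \<kappa> (\<kappa> - 1). (\<epsilon> / (2 - \<epsilon>)) powr (real n * (1 - zeta S q))))"
    by (rule mult_left_mono[OF add_left_mono[OF key']]) (use pos in linarith)
  then show ?thesis unfolding lam_def by linarith
qed

end
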